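(* Let $f$ be a $k$-term DNF over $x_1,\dots,x_n$ and let $\mathcal{F}$ be a set of eligible pairs that is fully expressive for $f$. Then $f$ can be written as an $\mathcal{F}$-augmented PTF of degree at most $d_{\max}=O(\sqrt{k}\log k)$ and weight at most $W_{\max}=2^{O(\sqrt{k}\log^2 k)}$.
   Context: Variables $x_i$ and terms take values in $\{0,1\}$; terms are sets of literals. An eligible pair is $(T',R_{T'})$ where $T'$ is a term (candidate stem) and $R_{T'}\subseteq[n]$ is disjoint from the variables occurring in $T'$. For a set $\mathcal{F}$ of eligible pairs (always assumed to contain a pair whose term is the empty term, i.e. the constant $1$), an $\mathcal{F}$-augmented monomial of degree $d$ is a product $T'\cdot\prod_{i\in S}x_i$ with $(T',R_{T'})\in\mathcal{F}$, $S\subseteq R_{T'}$ and $|S|\le d$. An $\mathcal{F}$-augmented PTF of degree $d$ and weight $W$ is a function $\mathbf{1}[p(x)\ge\theta]$ where $p$ is a linear combination, with integer coefficients whose absolute values sum to at most $W$, of $\mathcal{F}$-augmented monomials of degree at most $d$. A term $T'$ is a valid stem of a term $T$ if $T'\subseteq T$ and $|T\setminus T'|\le 2k$. $\mathcal{F}$ is fully expressive for $f$ if for every term $T_i$ of $f$ there is $(T',R_{T'})\in\mathcal{F}$ such that $T'$ is a valid stem of $T_i$ and every variable of $T_i\setminus T'$ lies in $R_{T'}$. *)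

theory Defs
  imports Complex_Main
begin

text \<open>Variables are indexed by natural numbers; the variables of an n-variable
  problem are 0,...,n-1.  A literal (i,b) is satisfied by x iff x i = b,
  i.e. (i,True) is the literal x_i and (i,False) is its negation.\<close>

type_synonym lit = "nat \<times> bool"
type_synonym trm = "lit set"

definition eval_term :: "trm \<Rightarrow> (nat \<Rightarrow> bool) \<Rightarrow> bool" where
  "eval_term T x \<longleftrightarrow> (\<forall>(i, b) \<in> T. x i = b)"

definition vars :: "trm \<Rightarrow> nat set" where
  "vars T = fst ` T"

definition is_term :: "nat \<Rightarrow> trm \<Rightarrow> bool" where
  "is_term n T \<longleftrightarrow> finite T \<and> vars T \<subseteq> {..<n}"

text \<open>A DNF given by its list of terms (a k-term DNF has a list of length k).\<close>
definition dnf_eval :: "trm list \<Rightarrow> (nat \<Rightarrow> bool) \<Rightarrow> bool" where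
  "dnf_eval ts x \<longleftrightarrow> (\<exists>T \<in> set ts. eval_term T x)"

definition eligible :: "nat \<Rightarrow> trm \<times> nat set \<Rightarrow> bool" where
  "eligible n p \<longleftrightarrow> is_term n (fst p) \<and> snd p \<subseteq> {..<n} \<and> snd p \<inter> vars (fst p) = {}"

definition valid_stem :: "nat \<Rightarrow> trm \<Rightarrow> trm \<Rightarrow> bool" where
  "valid_stem k T' T \<longleftrightarrow> T' \<subseteq> T \<and> card (T - T') \<le> 2 * k"

definition fully_expressive :: "nat \<Rightarrow> (trm \<times> nat set) set \<Rightarrow> trm list \<Rightarrow> bool" where
  "fully_expressive k F ts \<longleftrightarrow>
     (\<forall>T \<in> set ts. \<exists>(T', R) \<in> F. valid_stem k T' T \<and> vars (T - T') \<subseteq> R)"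

definition aug_mono_val :: "trm \<Rightarrow> nat set \<Rightarrow> (nat \<Rightarrow> bool) \<Rightarrow> int" where
  "aug_mono_val T' S x = (if eval_term T' x then 1 else 0) * (\<Prod>i\<in>S. if x i then 1 else 0)"

definition aug_PTF :: "(trm \<times> nat set) set \<Rightarrow> nat \<Rightarrow> real \<Rightarrow> ((nat \<Rightarrow> bool) \<Rightarrow> bool) \<Rightarrow> bool" where
  "aug_PTF F d W f \<longleftrightarrow>
     (\<exists>(M :: (trm \<times> nat set \<times> nat set) set) (c :: trm \<times> nat set \<times> nat set \<Rightarrow> int) (\<theta> :: real).
        finite M \<and>
        (\<forall>(T', R, S) \<in> M. (T', R) \<in> F \<and> S \<subseteq> R \<and> card S \<le> d) \<and>
        real_of_int (\<Sum>m\<in>M. \<bar>c m\<bar>) \<le> W \<and>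
        (\<forall>x. f x \<longleftrightarrow>
              real_of_int (\<Sum>(T', R, S)\<in>M. c (T', R, S) * aug_mono_val T' S x) \<ge> \<theta>))"

end

theory Submission
  imports Defs
begin


type_synonym mpoly = "(int \<times> nat set) list"

definition ind :: "nat set \<Rightarrow> (nat \<Rightarrow> bool) \<Rightarrow> int" where
  "ind S x = (if (\<forall>i\<in>S. x i) then 1 else 0)"

definition ev :: "mpoly \<Rightarrow> (nat \<Rightarrow> bool) \<Rightarrow> int" where
  "ev p x = sum_list (map (\<lambda>(c,S). c * ind S x) p)"

definition wt :: "mpoly \<Rightarrow> int" where
  "wt p = sum_list (map (\<lambda>(c,S). \<bar>c\<bar>) p)"

definition okp :: "nat \<Rightarrow> nat set \<Rightarrow> mpoly \<Rightarrow> bool" where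
  "okp d V p \<longleftrightarrow> (\<forall>(c,S)\<in>set p. S \<subseteq> V \<and> card S \<le> d)"

definition pmul :: "mpoly \<Rightarrow> mpoly \<Rightarrow> mpoly" where
  "pmul p q = concat (map (\<lambda>(c,S). map (\<lambda>(c',S'). (c*c', S \<union> S')) q) p)"

definition psc :: "int \<Rightarrow> mpoly \<Rightarrow> mpoly" where
  "psc a p = map (\<lambda>(c,S). (a*c, S)) p"

definition pconst :: "int \<Rightarrow> mpoly" where
  "pconst a = [(a, {})]"

lemma ev_Nil[simp]: "ev [] x = 0" by (simp add: ev_def)
lemma ev_Cons[simp]: "ev ((c,S)#p) x = c * ind S x + ev p x" by (simp add: ev_def)
lemma ev_append[simp]: "ev (p @ q) x = ev p x + ev q x" by (simp add: ev_def)
lemma wt_Nil[simp]: "wt [] = 0" by (simp add: wt_def)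
lemma wt_Cons[simp]: "wt ((c,S)#p) = \<bar>c\<bar> + wt p" by (simp add: wt_def)
lemma wt_append[simp]: "wt (p @ q) = wt p + wt q" by (simp add: wt_def)
lemma wt_nonneg: "wt p \<ge> 0" by (induction p) auto
lemma ev_concat: "ev (concat ps) x = sum_list (map (\<lambda>p. ev p x) ps)"
  by (induction ps) auto
lemma wt_concat: "wt (concat ps) = sum_list (map wt ps)"
  by (induction ps) auto

lemma ind_Un: "ind (S \<union> S') x = ind S x * ind S' x"
  by (auto simp: ind_def)

lemma ev_pmul: "ev (pmul p q) x = ev p x * ev q x"
proof (induction p)
  case Nil then show ?case by (simp add: pmul_def)
next
  case (Cons a p)
  obtain c S where a: "a = (c,S)" by force
  have "ev (map (\<lambda>(c',S'). (c*c', S \<union> S')) q) x = c * ind S x * ev q x"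
    by (induction q) (auto simp: ind_Un algebra_simps)
  with Cons show ?case by (simp add: pmul_def a algebra_simps)
qed

lemma wt_pmul: "wt (pmul p q) = wt p * wt q"
proof (induction p)
  case Nil then show ?case by (simp add: pmul_def)
next
  case (Cons a p)
  obtain c S where a: "a = (c,S)" by force
  have "wt (map (\<lambda>(c',S'). (c*c', S \<union> S')) q) = \<bar>c\<bar> * wt q"
    by (induction q) (auto simp: abs_mult algebra_simps)
  with Cons show ?case by (simp add: pmul_def a algebra_simps)
qed

lemma okp_pmul:
  assumes "okp d1 V p" "okp d2 V q" "finite V"
  shows "okp (d1+d2) V (pmul p q)"
  using assms unfolding okp_def pmul_def
  apply (clarsimp)
  subgoal for c S c' S'
    using card_Un_le[of S S'] by force
  done

lemma okp_append: "okp d V p \<Longrightarrow> okp d V q \<Longrightarrow> okp d V (p @ q)"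
  by (auto simp: okp_def)
lemma okp_mono: "okp d V p \<Longrightarrow> d \<le> d' \<Longrightarrow> okp d' V p"
  by (fastforce simp: okp_def)

lemma ev_psc[simp]: "ev (psc a p) x = a * ev p x"
  by (induction p) (auto simp: psc_def algebra_simps)
lemma wt_psc[simp]: "wt (psc a p) = \<bar>a\<bar> * wt p"
  by (induction p) (auto simp: psc_def algebra_simps abs_mult)
lemma okp_psc: "okp d V p \<Longrightarrow> okp d V (psc a p)"
  by (auto simp: okp_def psc_def)

lemma ev_pconst[simp]: "ev (pconst a) x = a" by (simp add: pconst_def ind_def)
lemma wt_pconst[simp]: "wt (pconst a) = \<bar>a\<bar>" by (simp add: pconst_def)
lemma okp_pconst: "okp d V (pconst a)" by (simp add: pconst_def okp_def)

fun ppow :: "mpoly \<Rightarrow> nat \<Rightarrow> mpoly" where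
  "ppow p 0 = pconst 1"
| "ppow p (Suc s) = pmul p (ppow p s)"

lemma ev_ppow: "ev (ppow p s) x = ev p x ^ s"
  by (induction s) (auto simp: ev_pmul)
lemma wt_ppow: "wt (ppow p s) = wt p ^ s"
  by (induction s) (auto simp: wt_pmul)
lemma okp_ppow: "okp d V p \<Longrightarrow> finite V \<Longrightarrow> okp (d*s) V (ppow p s)"
  by (induction s) (auto simp: okp_pconst intro: okp_pmul)

fun cheb :: "nat \<Rightarrow> real \<Rightarrow> real" where
  "cheb 0 x = 1"
| "cheb (Suc 0) x = x"
| "cheb (Suc (Suc r)) x = 2 * x * cheb (Suc r) x - cheb r x"

lemma cheb_cos_aux: "cheb r (cos t) = cos (real r * t) \<and> cheb (Suc r) (cos t) = cos (real (Suc r) * t)"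
proof (induction r)
  case (Suc r)
  have "cos (real (Suc (Suc r)) * t) = cos ((real r + 1) * t + t)" by (simp add: algebra_simps)
  moreover have "cos (real r * t) = cos ((real r + 1) * t - t)" by (simp add: algebra_simps)
  ultimately have "cos (real (Suc (Suc r)) * t) + cos (real r * t) = 2 * cos t * cos ((real r + 1) * t)"
    by (simp only: cos_add cos_diff) (simp add: algebra_simps)
  with Suc show ?case by (simp add: algebra_simps)
qed auto

lemma cheb_cos: "cheb r (cos t) = cos (real r * t)"
  using cheb_cos_aux by blast

lemma cheb_bounded: "\<bar>x\<bar> \<le> 1 \<Longrightarrow> \<bar>cheb r x\<bar> \<le> 1"
proof -
  assume "\<bar>x\<bar> \<le> 1"
  then have "x = cos (arccos x)" by (simp add: cos_arccos_abs)
  then have "cheb r x = cos (real r * arccos x)" by (metis cheb_cos)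
  then show ?thesis by simp
qed

lemma cheb_grow_aux: "e \<ge> 0 \<Longrightarrow> cheb r (1+e) \<ge> 1 + (real r)^2 * e \<and> cheb (Suc r) (1+e) - cheb r (1+e) \<ge> (2 * real r + 1) * e"
proof (induction r)
  case 0 then show ?case by simp
next
  case (Suc r)
  let ?a = "cheb r (1+e)" and ?b = "cheb (Suc r) (1+e)"
  have h1: "?b \<ge> 1 + (real (Suc r))^2 * e"
    using Suc by (simp add: power2_eq_square algebra_simps)
  have "cheb (Suc (Suc r)) (1+e) - ?b = (?b - ?a) + 2 * e * ?b"
    by (simp add: algebra_simps)
  have "1 \<le> ?b" using h1 Suc.prems by (smt (verit) mult_nonneg_nonneg zero_le_power2)
  moreover have "2 * e * ?b \<ge> 2 * e * 1"
    using calculation Suc.prems by (intro mult_left_mono) (auto simp: zero_le_mult_iff)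
  ultimately have "cheb (Suc (Suc r)) (1+e) - ?b \<ge> (2 * real (Suc r) + 1) * e"
    using Suc by (simp add: algebra_simps)
  with h1 show ?case by simp
qed

lemma cheb_grow: "e \<ge> 0 \<Longrightarrow> cheb r (1+e) \<ge> 1 + (real r)^2 * e"
  using cheb_grow_aux by blast



fun U :: "mpoly \<Rightarrow> int \<Rightarrow> nat \<Rightarrow> mpoly" where
  "U Y N 0 = pconst 1"
| "U Y N (Suc 0) = Y"
| "U Y N (Suc (Suc r)) = pmul (psc 2 Y) (U Y N (Suc r)) @ psc (-(N^2)) (U Y N r)"

lemma ev_U: "N > 0 \<Longrightarrow> real_of_int (ev (U Y N r) x) = real_of_int N ^ r * cheb r (real_of_int (ev Y x) / real_of_int N)"
proof (induction Y N r rule: U.induct)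
  case (3 Y N r)
  then show ?case by (simp add: ev_pmul field_simps power2_eq_square)
qed auto

lemma wt_U: "wt Y \<le> a \<Longrightarrow> 0 \<le> N \<Longrightarrow> N \<le> a \<Longrightarrow> wt (U Y N r) \<le> (3*a)^r"
proof (induction Y N r rule: U.induct)
  case (1 Y N) then show ?case by simp
next
  case (2 Y N) then show ?case by simp
next
  case (3 Y N r)
  have a0: "a \<ge> 0" using 3 by simp
  have wY: "wt Y \<ge> 0" by (rule wt_nonneg)
  have "wt (U Y N (Suc (Suc r))) = 2 * wt Y * wt (U Y N (Suc r)) + N^2 * wt (U Y N r)"
    using 3 by (simp add: wt_pmul)
  also have "\<dots> \<le> 2 * a * (3*a)^(Suc r) + a^2 * (3*a)^r"
  proof (rule add_mono)
    show "2 * wt Y * wt (U Y N (Suc r)) \<le> 2 * a * (3*a)^(Suc r)"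
      using 3 wY a0 wt_nonneg by (intro mult_mono) auto
    show "N^2 * wt (U Y N r) \<le> a^2 * (3*a)^r"
      using 3 a0 wt_nonneg by (intro mult_mono power_mono) auto
  qed
  also have "\<dots> = 7 * a^2 * (3*a)^r" by (simp add: power2_eq_square algebra_simps)
  also have "\<dots> \<le> 9 * a^2 * (3*a)^r" using a0 by (intro mult_right_mono) auto
  also have "\<dots> = (3*a)^(Suc (Suc r))" by (simp add: power2_eq_square algebra_simps)
  finally show ?case .
qed

lemma okp_U: "okp 1 V Y \<Longrightarrow> finite V \<Longrightarrow> okp r V (U Y N r)"
proof (induction Y N r rule: U.induct)
  case (3 Y N r)
  have "okp (1 + Suc r) V (pmul (psc 2 Y) (U Y N (Suc r)))"
    using 3 by (intro okp_pmul okp_psc) auto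
  moreover have "okp r V (psc (-(N^2)) (U Y N r))" using 3 by (intro okp_psc) auto
  then have "okp (Suc (Suc r)) V (psc (-(N^2)) (U Y N r))" by (rule okp_mono) simp
  ultimately show ?case by (auto intro: okp_append)
qed (auto simp: okp_pconst)

definition sat :: "lit \<Rightarrow> (nat \<Rightarrow> bool) \<Rightarrow> bool" where
  "sat l x \<longleftrightarrow> x (fst l) = snd l"

definition litp :: "lit \<Rightarrow> mpoly" where
  "litp l = (if snd l then [(1,{fst l})] else [(1,{}),(-1,{fst l})])"

lemma ev_litp: "ev (litp l) x = (if sat l x then 1 else 0)"
  by (cases l) (auto simp: litp_def sat_def ind_def)
lemma wt_litp: "wt (litp l) \<le> 2"
  by (auto simp: litp_def)
lemma okp_litp: "fst l \<in> V \<Longrightarrow> okp 1 V (litp l)"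
  by (auto simp: litp_def okp_def)

definition tp :: "lit list \<Rightarrow> mpoly" where
  "tp xs = concat (map litp xs)"

lemma ev_tp: "ev (tp xs) x = int (length (filter (\<lambda>l. sat l x) xs))"
  by (induction xs) (auto simp: tp_def ev_litp)
lemma wt_tp: "wt (tp xs) \<le> 2 * int (length xs)"
proof (induction xs)
  case (Cons a xs) then show ?case using wt_litp[of a] by (simp add: tp_def)
qed (simp add: tp_def)
lemma okp_tp: "fst ` set xs \<subseteq> V \<Longrightarrow> okp 1 V (tp xs)"
proof (induction xs)
  case (Cons a xs) then show ?case using okp_litp[of a V] by (auto simp: tp_def intro!: okp_append)
qed (simp add: tp_def okp_def)

lemma tp_full: "ev (tp xs) x = int (length xs) \<longleftrightarrow> (\<forall>l\<in>set xs. sat l x)"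
  unfolding ev_tp by (metis filter_True length_filter_less of_nat_eq_iff order_less_irrefl)



definition Yp :: "int \<Rightarrow> lit list \<Rightarrow> mpoly" where
  "Yp N xs = pconst (N - 2 * int (length xs) + 2) @ psc 2 (tp xs)"

definition Pp :: "int \<Rightarrow> nat \<Rightarrow> nat \<Rightarrow> lit list \<Rightarrow> mpoly" where
  "Pp N r s xs = ppow (U (Yp N xs) N r) s"

lemma Pp_sat:
  assumes N: "N \<ge> 1" and r: "real r ^ 2 \<ge> real_of_int N" and all: "\<forall>l\<in>set xs. sat l x"
  shows "ev (Pp N r s xs) x \<ge> 2^s * N^(r*s)"
proof -
  have "ev (tp xs) x = int (length xs)" using all tp_full by blast
  then have Y: "ev (Yp N xs) x = N + 2" by (simp add: Yp_def)
  have e: "real_of_int (N+2) / real_of_int N = 1 + 2 / real_of_int N" using N by (simp add: field_simps)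
  have "cheb r (1 + 2 / real_of_int N) \<ge> 1 + (real r)^2 * (2 / real_of_int N)"
    using N by (intro cheb_grow) auto
  moreover have "(real r)^2 * (2 / real_of_int N) \<ge> 2"
    using N r by (simp add: field_simps)
  ultimately have c: "cheb r (1 + 2 / real_of_int N) \<ge> 2" by linarith
  have "real_of_int (ev (U (Yp N xs) N r) x) = real_of_int N ^ r * cheb r (1 + 2 / real_of_int N)"
    using N ev_U[of N "Yp N xs" r x] Y e by simp
  also have "\<dots> \<ge> real_of_int N ^ r * 2" using c N by (intro mult_left_mono) auto
  finally have "real_of_int (2 * N^r) \<le> real_of_int (ev (U (Yp N xs) N r) x)" by (simp add: mult.commute)
  then have "ev (U (Yp N xs) N r) x \<ge> 2 * N^r" by (simp only: of_int_le_iff)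
  then have "ev (U (Yp N xs) N r) x ^ s \<ge> (2 * N^r) ^ s"
    using N by (intro power_mono) auto
  then show ?thesis by (simp add: Pp_def ev_ppow power_mult_distrib power_mult)
qed

lemma Pp_unsat:
  assumes N: "N \<ge> 1" and m: "int (length xs) \<le> N + 1" and nall: "\<not> (\<forall>l\<in>set xs. sat l x)"
  shows "\<bar>ev (Pp N r s xs) x\<bar> \<le> N^(r*s)"
proof -
  define c where "c = ev (tp xs) x"
  define y where "y = ev (Yp N xs) x"
  have "c \<noteq> int (length xs)" using nall tp_full unfolding c_def by blast
  moreover have "c \<le> int (length xs)" "c \<ge> 0" unfolding ev_tp c_def by auto
  ultimately have c1: "c \<le> int (length xs) - 1" by linarith
  have yv: "y = N - 2 * int (length xs) + 2 + 2 * c" unfolding y_def c_def Yp_def by simp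
  have Y: "\<bar>y\<bar> \<le> N" unfolding abs_le_iff using yv c1 m \<open>c \<ge> 0\<close> by linarith
  have Nr: "real_of_int N > 0" using N by simp
  have "\<bar>real_of_int y\<bar> \<le> real_of_int N" using Y by linarith
  then have "\<bar>real_of_int y / real_of_int N\<bar> \<le> 1"
    using Nr by (simp only: abs_divide abs_of_pos) (simp add: divide_le_eq_1_pos)
  then have cb: "\<bar>cheb r (real_of_int y / real_of_int N)\<bar> \<le> 1" by (rule cheb_bounded)
  have "real_of_int (ev (U (Yp N xs) N r) x) = real_of_int N ^ r * cheb r (real_of_int y / real_of_int N)"
    using N ev_U[of N "Yp N xs" r x] unfolding y_def by simp
  then have "\<bar>real_of_int (ev (U (Yp N xs) N r) x)\<bar> = real_of_int N ^ r * \<bar>cheb r (real_of_int y / real_of_int N)\<bar>"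
    using Nr by (simp add: abs_mult)
  also have "\<dots> \<le> real_of_int N ^ r * 1" using Nr cb by (intro mult_left_mono) auto
  finally have "\<bar>real_of_int (ev (U (Yp N xs) N r) x)\<bar> \<le> real_of_int (N ^ r)" by simp
  then have "\<bar>ev (U (Yp N xs) N r) x\<bar> \<le> N ^ r" by linarith
  then have "\<bar>ev (U (Yp N xs) N r) x\<bar> ^ s \<le> (N ^ r) ^ s" by (intro power_mono) auto
  then show ?thesis by (simp add: Pp_def ev_ppow power_abs power_mult)
qed

lemma Pp_wt:
  assumes N: "N \<ge> 2" and m: "int (length xs) \<le> N"
  shows "wt (Pp N r s xs) \<le> (24 * N)^(r*s)"
proof -
  have "wt (Yp N xs) \<le> \<bar>N - 2 * int (length xs) + 2\<bar> + 2 * (2 * int (length xs))"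
    using wt_tp[of xs] by (simp add: Yp_def)
  also have "\<dots> \<le> 8 * N" using N m by linarith
  finally have "wt (U (Yp N xs) N r) \<le> (3 * (8*N))^r" using N by (intro wt_U) auto
  then have "wt (U (Yp N xs) N r) ^ s \<le> ((24*N)^r)^s" using wt_nonneg by (intro power_mono) auto
  then show ?thesis by (simp add: Pp_def wt_ppow power_mult)
qed

lemma Pp_okp:
  assumes "fst ` set xs \<subseteq> V" "finite V"
  shows "okp (r*s) V (Pp N r s xs)"
proof -
  have "okp 1 V (Yp N xs)" unfolding Yp_def using assms
    by (intro okp_append okp_pconst okp_psc okp_tp) auto
  then show ?thesis unfolding Pp_def using assms by (intro okp_ppow okp_U) auto
qed

definition cf :: "(int \<times> 'a) list \<Rightarrow> 'a \<Rightarrow> int" where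
  "cf L m = sum_list (map fst (filter (\<lambda>p. snd p = m) L))"

lemma cf_Nil[simp]: "cf [] m = 0" by (simp add: cf_def)
lemma cf_Cons[simp]: "cf (p # L) m = (if snd p = m then fst p else 0) + cf L m"
  by (simp add: cf_def)

lemma cf_sum:
  assumes "finite M" "snd ` set L \<subseteq> M"
  shows "(\<Sum>m\<in>M. cf L m * v m) = sum_list (map (\<lambda>p. fst p * v (snd p)) L)"
  using assms(2)
proof (induction L)
  case Nil then show ?case by simp
next
  case (Cons p L)
  have "(\<Sum>m\<in>M. cf (p#L) m * v m) = (\<Sum>m\<in>M. (if snd p = m then fst p * v m else 0)) + (\<Sum>m\<in>M. cf L m * v m)"
    by (subst sum.distrib[symmetric]) (rule sum.cong, auto simp: algebra_simps)
  also have "(\<Sum>m\<in>M. (if snd p = m then fst p * v m else 0)) = fst p * v (snd p)"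
    using Cons.prems assms(1) by (simp add: sum.delta)
  finally show ?case using Cons by simp
qed

lemma cf_abs:
  assumes "finite M"
  shows "(\<Sum>m\<in>M. \<bar>cf L m\<bar>) \<le> sum_list (map (\<lambda>p. \<bar>fst p\<bar>) L)"
proof (induction L)
  case Nil then show ?case by simp
next
  case (Cons p L)
  have "(\<Sum>m\<in>M. \<bar>cf (p#L) m\<bar>) \<le> (\<Sum>m\<in>M. \<bar>if snd p = m then fst p else 0\<bar> + \<bar>cf L m\<bar>)"
    by (intro sum_mono) (simp add: abs_triangle_ineq)
  also have "\<dots> = (\<Sum>m\<in>M. (if snd p = m then \<bar>fst p\<bar> else 0)) + (\<Sum>m\<in>M. \<bar>cf L m\<bar>)"
    by (subst sum.distrib[symmetric]) (rule sum.cong, auto)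
  also have "(\<Sum>m\<in>M. (if snd p = m then \<bar>fst p\<bar> else 0)) \<le> \<bar>fst p\<bar>"
    using assms by (simp add: sum.delta)
  finally show ?case using Cons by simp
qed

lemma sum_list_lower:
  assumes "\<forall>T\<in>set ts. v T \<ge> -(B::int)" "B \<ge> 0"
  shows "sum_list (map v ts) \<ge> - int (length ts) * B"
  using assms by (induction ts) (auto simp: algebra_simps)

lemma sum_list_upper:
  assumes "\<forall>T\<in>set ts. v T \<le> (B::int)"
  shows "sum_list (map v ts) \<le> int (length ts) * B"
  using assms by (induction ts) (auto simp: algebra_simps)

lemma sum_list_one_big:
  assumes "T \<in> set ts" "v T \<ge> A" "\<forall>T\<in>set ts. v T \<ge> -(B::int)" "B \<ge> 0"
  shows "sum_list (map v ts) \<ge> A - (int (length ts) - 1) * B"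
  using assms
proof (induction ts)
  case Nil then show ?case by simp
next
  case (Cons a ts)
  show ?case
  proof (cases "T = a")
    case True
    have "sum_list (map v ts) \<ge> - int (length ts) * B"
      using Cons.prems by (intro sum_list_lower) auto
    with True Cons.prems show ?thesis by (simp add: algebra_simps)
  next
    case False
    then have "sum_list (map v ts) \<ge> A - (int (length ts) - 1) * B" using Cons by auto
    moreover have "v a \<ge> -B" using Cons.prems by auto
    ultimately show ?thesis by (simp add: algebra_simps)
  qed
qed

lemma prod_ind_fin: "finite S \<Longrightarrow> (\<Prod>i\<in>S. if x i then 1 else 0) = (ind S x :: int)"
  by (induction S rule: finite_induct) (auto simp: ind_def)



lemma nat_ceil_bounds:
  fixes y :: real assumes "y \<ge> 0"
  shows "real (nat \<lceil>y\<rceil>) \<le> y + 1" "real (nat \<lceil>y\<rceil>) \<ge> y"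
proof -
  have z: "\<lceil>y\<rceil> \<ge> 0" using assms by simp
  have e: "real (nat \<lceil>y\<rceil>) = real_of_int \<lceil>y\<rceil>" using z by (simp only: of_nat_nat)
  show "real (nat \<lceil>y\<rceil>) \<le> y + 1" unfolding e using ceiling_correct[of y] by linarith
  show "real (nat \<lceil>y\<rceil>) \<ge> y" unfolding e by (rule le_of_int_ceiling)
qed

lemma num_r: "k \<ge> 1 \<Longrightarrow> real (nat \<lceil>sqrt (2 * real k)\<rceil>) \<le> 3 * sqrt (real k)"
proof -
  assume k: "k \<ge> 1"
  have s1: "sqrt (real k) \<ge> 1" using k by simp
  have s2: "sqrt 2 \<le> (2::real)"
  proof -
    have "sqrt 2 \<le> sqrt (4::real)" by (simp only: real_sqrt_le_iff)
    then show ?thesis by simp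
  qed
  have "sqrt (2 * real k) = sqrt 2 * sqrt (real k)" by (simp add: real_sqrt_mult)
  also have "\<dots> \<le> 2 * sqrt (real k)" using s2 by (intro mult_right_mono) auto
  finally have "sqrt (2 * real k) \<le> 2 * sqrt (real k)" .
  moreover have "real (nat \<lceil>sqrt (2 * real k)\<rceil>) \<le> sqrt (2 * real k) + 1"
    by (rule nat_ceil_bounds) simp
  ultimately show ?thesis using s1 by linarith
qed

lemma L_ge1: "k \<ge> 1 \<Longrightarrow> log 2 (real k + 1) \<ge> 1"
  by simp

lemma num_s: "k \<ge> 1 \<Longrightarrow> real (nat \<lceil>log 2 (2 * real k)\<rceil>) \<le> 3 * log 2 (real k + 1)"
proof -
  assume k: "k \<ge> 1"
  have "log 2 (2 * real k) = 1 + log 2 (real k)" using k by (simp add: log_mult)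
  also have "\<dots> \<le> 1 + log 2 (real k + 1)" using k by simp
  finally have a: "log 2 (2 * real k) \<le> 1 + log 2 (real k + 1)" .
  have "log 2 (2 * real k) \<ge> 0" using k by simp
  then have "real (nat \<lceil>log 2 (2 * real k)\<rceil>) \<le> log 2 (2 * real k) + 1"
    by (rule nat_ceil_bounds)
  then show ?thesis using a L_ge1[OF k] by linarith
qed

lemma num_r2: "real (nat \<lceil>sqrt (2 * real k)\<rceil>) ^ 2 \<ge> 2 * real k"
proof -
  have "real (nat \<lceil>sqrt (2 * real k)\<rceil>) \<ge> sqrt (2 * real k)" by (rule nat_ceil_bounds) simp
  then have "real (nat \<lceil>sqrt (2 * real k)\<rceil>) ^ 2 \<ge> sqrt (2 * real k) ^ 2" by (intro power_mono) auto
  then show ?thesis by simp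
qed

lemma num_s2: "k \<ge> 1 \<Longrightarrow> (2::int) ^ nat \<lceil>log 2 (2 * real k)\<rceil> \<ge> 2 * int k"
proof -
  assume k: "k \<ge> 1"
  let ?s = "nat \<lceil>log 2 (2 * real k)\<rceil>"
  have "real ?s \<ge> log 2 (2 * real k)" by (rule nat_ceil_bounds) (use k in simp)
  then have a: "2 powr real ?s \<ge> 2 powr log 2 (2 * real k)" by (intro powr_mono) auto
  have p: "(2::real) powr real ?s = 2 ^ ?s" by (rule powr_realpow) simp
  have q: "(2::real) powr log 2 (2 * real k) = 2 * real k" using k by simp
  have "(2::real) ^ ?s \<ge> 2 * real k" using a unfolding p q .
  then have "real_of_int (2 ^ ?s) \<ge> real_of_int (2 * int k)" by simp
  then show ?thesis by (simp only: of_int_le_iff)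
qed

lemma num_W:
  assumes k: "k \<ge> 1" and d: "real d \<le> 9 * sqrt (real k) * log 2 (real k + 1)"
  shows "real k * (48 * real k) ^ d \<le> 2 powr (64 * sqrt (real k) * (log 2 (real k + 1))^2)"
proof -
  define L where "L = log 2 (real k + 1)"
  have L1: "L \<ge> 1" using k by (simp add: L_def)
  have s1: "sqrt (real k) \<ge> 1" using k by simp
  have kL: "real k \<le> 2 powr L" unfolding L_def by simp
  have "(real k + 1) ^ 6 \<ge> 2 ^ 6" using k by (intro power_mono) auto
  then have "(real k + 1) * (real k + 1) ^ 6 \<ge> (real k + 1) * 64" by (intro mult_left_mono) auto
  moreover have "(real k + 1) ^ 7 = (real k + 1) * (real k + 1) ^ 6" by (simp only: power_Suc[symmetric] numeral_eq_Suc) simp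
  ultimately have "(real k + 1) ^ 7 \<ge> 64 * (real k + 1)" by simp
  then have "48 * real k \<le> (real k + 1) ^ 7" by (rule order_trans[rotated]) simp
  also have "\<dots> = 2 powr (7 * L)"
  proof -
    have b: "2 powr L = real k + 1" unfolding L_def by simp
    have "(2::real) powr (7 * L) = (2 powr L) powr 7" by (simp add: powr_powr mult.commute)
    also have "\<dots> = (real k + 1) powr real (7::nat)" unfolding b by simp
    also have "\<dots> = (real k + 1) ^ 7" by (rule powr_realpow) simp
    finally show ?thesis by simp
  qed
  finally have h48: "48 * real k \<le> 2 powr (7 * L)" .
  have "(48 * real k) ^ d \<le> (2 powr (7 * L)) ^ d" using h48 by (intro power_mono) auto
  also have "\<dots> = (2 powr (7 * L)) powr real d" by (rule powr_realpow[symmetric]) simp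
  also have "\<dots> = 2 powr (7 * L * real d)" by (simp add: powr_powr)
  finally have hd: "(48 * real k) ^ d \<le> 2 powr (7 * L * real d)" .
  have "real k * (48 * real k) ^ d \<le> 2 powr L * 2 powr (7 * L * real d)"
    using kL hd by (intro mult_mono) auto
  also have "\<dots> = 2 powr (L + 7 * L * real d)" by (simp add: powr_add)
  also have "\<dots> \<le> 2 powr (64 * sqrt (real k) * L^2)"
  proof (intro powr_mono)
    have "7 * L * real d \<le> 7 * L * (9 * sqrt (real k) * L)" using d L1 by (simp add: L_def)
    moreover have "L \<le> sqrt (real k) * L^2"
    proof -
      have "L \<le> L * L" using L1 by simp
      also have "\<dots> = 1 * (L * L)" by simp
      also have "\<dots> \<le> sqrt (real k) * (L * L)" using s1 L1 by (intro mult_right_mono) auto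
      finally show ?thesis by (simp add: power2_eq_square)
    qed
    ultimately show "L + 7 * L * real d \<le> 64 * sqrt (real k) * L^2"
      by (simp add: power2_eq_square algebra_simps)
  qed auto
  finally show ?thesis by (simp add: L_def)
qed



lemma sum_abs_map: "sum_list (map (\<lambda>p. \<bar>fst p\<bar>) (map (\<lambda>(c,S). (c, h S)) p)) = wt p"
  by (induction p) auto

lemma sum_val_map:
  assumes "okp d V p" "finite V"
  shows "sum_list (map (\<lambda>q. fst q * (case snd q of (T',R,S) \<Rightarrow> aug_mono_val T' S x)) (map (\<lambda>(c,S). (c,(a,b,S))) p))
     = (if eval_term a x then 1 else 0) * ev p x"
  using assms(1)
proof (induction p)
  case Nil then show ?case by simp
next
  case (Cons q p)
  obtain c S where q: "q = (c,S)" by force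
  have "S \<subseteq> V" using Cons.prems q by (auto simp: okp_def)
  then have "finite S" using assms(2) finite_subset by blast
  then have "aug_mono_val a S x = (if eval_term a x then 1 else 0) * ind S x"
    by (simp add: aug_mono_val_def prod_ind_fin)
  moreover have "okp d V p" using Cons.prems by (auto simp: okp_def)
  ultimately show ?case using Cons.IH q by (simp add: algebra_simps)
qed

lemma sum_list_concat_map:
  "sum_list (map f (concat (map g ts))) = sum_list (map (\<lambda>T. sum_list (map f (g T))) ts)"
  by (induction ts) auto

theorem lemma5p5:
  shows "\<exists>C > 0. \<forall>(n::nat) (k::nat) (ts::trm list) (F::(trm \<times> nat set) set).
    length ts = k \<longrightarrow>
    (\<forall>T \<in> set ts. is_term n T) \<longrightarrow>
    (\<forall>p \<in> F. eligible n p) \<longrightarrow>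
    (\<exists>R. ({}, R) \<in> F) \<longrightarrow>
    fully_expressive k F ts \<longrightarrow>
    (\<exists>(d::nat) (W::real).
       real d \<le> C * sqrt (real k) * log 2 (real k + 1) \<and>
       W \<le> 2 powr (C * sqrt (real k) * (log 2 (real k + 1))^2) \<and>
       aug_PTF F d W (dnf_eval ts))"
proof (rule exI[of _ 64], intro conjI allI impI)
  show "(64::real) > 0" by simp
  fix n k ts F
  assume len: "length ts = k" and tsT: "\<forall>T\<in>set ts. is_term n T"
    and Fel: "\<forall>p\<in>F. eligible n p" and fe: "fully_expressive k F ts"
  show "\<exists>(d::nat) (W::real).
       real d \<le> 64 * sqrt (real k) * log 2 (real k + 1) \<and>
       W \<le> 2 powr (64 * sqrt (real k) * (log 2 (real k + 1))^2) \<and>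
       aug_PTF F d W (dnf_eval ts)"
  proof (cases "k = 0")
    case True
    then have ts: "ts = []" using len by simp
    have "aug_PTF F 0 0 (dnf_eval ts)" unfolding aug_PTF_def dnf_eval_def ts
      by (rule exI[of _ "{}"], rule exI[of _ "\<lambda>_. 0"], rule exI[of _ 1]) simp
    then show ?thesis using True by (intro exI[of _ 0]) simp
  next
    case False
    then have k1: "k \<ge> 1" by simp
    have "\<forall>T\<in>set ts. \<exists>p\<in>F. valid_stem k (fst p) T \<and> vars (T - fst p) \<subseteq> snd p"
      using fe unfolding fully_expressive_def by (auto simp: split_def)
    then obtain g where g: "\<forall>T\<in>set ts. g T \<in> F \<and> valid_stem k (fst (g T)) T \<and> vars (T - fst (g T)) \<subseteq> snd (g T)"
      by (metis bchoice)
    define xs where "xs T = (SOME l. set l = T - fst (g T) \<and> distinct l)" for T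
    have xs: "set (xs T) = T - fst (g T) \<and> distinct (xs T)" if T: "T \<in> set ts" for T
    proof -
      have "finite T" using tsT T by (auto simp: is_term_def)
      then have "finite (T - fst (g T))" by simp
      then have "\<exists>l. set l = T - fst (g T) \<and> distinct l" by (rule finite_distinct_list)
      then show ?thesis unfolding xs_def by (rule someI_ex)
    qed
    have lenxs: "length (xs T) \<le> 2 * k" if T: "T \<in> set ts" for T
    proof -
      have "length (xs T) = card (T - fst (g T))" using xs[OF T] distinct_card by metis
      then show ?thesis using g T by (simp add: valid_stem_def)
    qed
    define N where "N = 2 * int k"
    define r where "r = nat \<lceil>sqrt (2 * real k)\<rceil>"
    define s where "s = nat \<lceil>log 2 (2 * real k)\<rceil>"
    define d where "d = r * s"
    define P where "P T = Pp N r s (xs T)" for T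
    define L where "L = concat (map (\<lambda>T. map (\<lambda>(c,S). (c, (fst (g T), snd (g T), S))) (P T)) ts)"
    define M where "M = snd ` set L"
    define B where "B = N ^ d"
    define \<theta> where "\<theta> = real k * real_of_int B + 1"
    define W where "W = real k * (48 * real k) ^ d"
    have N2: "N \<ge> 2" using k1 by (simp add: N_def)
    have B1: "B \<ge> 1" using N2 by (simp add: B_def)
    have lenN: "int (length (xs T)) \<le> N" if "T \<in> set ts" for T
      using lenxs[OF that] by (simp add: N_def)
    have okT: "okp d (snd (g T)) (P T) \<and> finite (snd (g T))" if T: "T \<in> set ts" for T
    proof -
      have el: "eligible n (g T)" using g Fel T by auto
      then have fin: "finite (snd (g T))" by (auto simp: eligible_def intro: finite_subset)
      have "fst ` set (xs T) = vars (T - fst (g T))" using xs[OF T] by (simp add: vars_def)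
      also have "\<dots> \<subseteq> snd (g T)" using g T by auto
      finally show ?thesis unfolding P_def d_def using fin by (simp add: Pp_okp)
    qed
    have Mprop: "\<forall>(T',R,S)\<in>M. (T',R)\<in>F \<and> S \<subseteq> R \<and> card S \<le> d"
    proof (intro ballI, clarify)
      fix T' R S assume "(T',R,S) \<in> M"
      then obtain T c where T: "T \<in> set ts" and cS: "(c,S) \<in> set (P T)" and TR: "T' = fst (g T)" "R = snd (g T)"
        unfolding M_def L_def by auto
      have "(T',R) \<in> F" using g T TR by auto
      moreover have "S \<subseteq> R \<and> card S \<le> d" using okT[OF T] cS TR by (auto simp: okp_def)
      ultimately show "(T',R)\<in>F \<and> S \<subseteq> R \<and> card S \<le> d" by blast
    qed
    have finM: "finite M" unfolding M_def by simp
    have wtsum: "(\<Sum>m\<in>M. \<bar>cf L m\<bar>) \<le> int k * (24 * N) ^ d"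
    proof -
      have "(\<Sum>m\<in>M. \<bar>cf L m\<bar>) \<le> sum_list (map (\<lambda>p. \<bar>fst p\<bar>) L)" using finM by (rule cf_abs)
      also have "\<dots> = sum_list (map (\<lambda>T. wt (P T)) ts)"
        unfolding L_def sum_list_concat_map sum_abs_map ..
      also have "\<dots> \<le> int (length ts) * (24 * N) ^ d"
      proof (intro sum_list_upper ballI)
        fix T assume "T \<in> set ts"
        then show "wt (P T) \<le> (24 * N) ^ d" unfolding P_def d_def by (rule Pp_wt[OF N2 lenN])
      qed
      finally show ?thesis using len by simp
    qed
    have Wr: "real_of_int (int k * (24 * N) ^ d) = W" unfolding W_def N_def by simp
    define vT where "vT T x = (if eval_term (fst (g T)) x then 1 else 0) * ev (P T) x" for T x
    have val: "(\<Sum>(T',R,S)\<in>M. cf L (T',R,S) * aug_mono_val T' S x) = sum_list (map (\<lambda>T. vT T x) ts)" for x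
    proof -
      have "(\<Sum>(T',R,S)\<in>M. cf L (T',R,S) * aug_mono_val T' S x)
          = (\<Sum>m\<in>M. cf L m * (case m of (T',R,S) \<Rightarrow> aug_mono_val T' S x))"
        by (rule sum.cong) (auto split: prod.splits)
      also have "\<dots> = sum_list (map (\<lambda>q. fst q * (case snd q of (T',R,S) \<Rightarrow> aug_mono_val T' S x)) L)"
        using finM by (rule cf_sum) (simp add: M_def)
      also have "\<dots> = sum_list (map (\<lambda>T. vT T x) ts)"
        unfolding L_def sum_list_concat_map
      proof (rule arg_cong[where f = sum_list], rule map_cong[OF refl])
        fix T assume T: "T \<in> set ts"
        show "sum_list (map (\<lambda>q. fst q * (case snd q of (T',R,S) \<Rightarrow> aug_mono_val T' S x))
                (map (\<lambda>(c,S). (c, (fst (g T), snd (g T), S))) (P T))) = vT T x"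
          unfolding vT_def using okT[OF T] by (intro sum_val_map) auto
      qed
      finally show ?thesis .
    qed
    have evT: "eval_term T x \<longleftrightarrow> eval_term (fst (g T)) x \<and> (\<forall>l\<in>set (xs T). sat l x)"
      if T: "T \<in> set ts" for T x
    proof -
      have sub: "fst (g T) \<subseteq> T" using g T by (auto simp: valid_stem_def)
      have TU: "T = fst (g T) \<union> set (xs T)" using xs[OF T] sub by blast
      have E: "eval_term A x \<longleftrightarrow> (\<forall>l\<in>A. sat l x)" for A
        unfolding eval_term_def sat_def by (simp add: split_def)
      show ?thesis unfolding E by (subst TU) blast
    qed
    have r2: "real r ^ 2 \<ge> real_of_int N" using num_r2[of k] by (simp add: r_def N_def)
    have s2: "(2::int) ^ s \<ge> 2 * int k" using num_s2[OF k1] by (simp add: s_def)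
    have big: "vT T x \<ge> 2 ^ s * B" if T: "T \<in> set ts" and e: "eval_term T x" for T x
    proof -
      have "eval_term (fst (g T)) x" "\<forall>l\<in>set (xs T). sat l x" using evT[OF T] e by auto
      then show ?thesis using Pp_sat[of N r "xs T" x s] N2 r2
        by (simp add: vT_def P_def B_def d_def)
    qed
    have small: "\<bar>vT T x\<bar> \<le> B" if T: "T \<in> set ts" and e: "\<not> eval_term T x" for T x
    proof (cases "eval_term (fst (g T)) x")
      case True
      then have "\<not> (\<forall>l\<in>set (xs T). sat l x)" using evT[OF T] e by auto
      then show ?thesis using Pp_unsat[of N "xs T" x r s] N2 lenN[OF T] True
        by (simp add: vT_def P_def B_def d_def)
    next
      case False then show ?thesis using B1 by (simp add: vT_def)
    qed
    have lower: "vT T x \<ge> - B" if T: "T \<in> set ts" for T x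
    proof (cases "eval_term T x")
      case True
      have "(0::int) \<le> 2 ^ s * B" using B1 by simp
      then show ?thesis using big[OF T True] B1 by linarith
    next
      case False then show ?thesis using small[OF T False] by linarith
    qed
    have PTF: "dnf_eval ts x \<longleftrightarrow> real_of_int (sum_list (map (\<lambda>T. vT T x) ts)) \<ge> \<theta>" for x
    proof
      assume "dnf_eval ts x"
      then obtain T where T: "T \<in> set ts" and e: "eval_term T x" unfolding dnf_eval_def by auto
      have "sum_list (map (\<lambda>T. vT T x) ts) \<ge> 2 ^ s * B - (int (length ts) - 1) * B"
        using T big[OF T e] B1 lower by (intro sum_list_one_big[of T ts "2^s*B" "\<lambda>T. vT T x" B]) auto
      moreover have "2 ^ s * B \<ge> 2 * int k * B" using s2 B1 by (intro mult_right_mono) auto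
      moreover have "(int (length ts) - 1) * B = int k * B - B" using len by (simp add: algebra_simps)
      moreover have "2 * int k * B = 2 * (int k * B)" by simp
      ultimately have "sum_list (map (\<lambda>T. vT T x) ts) \<ge> int k * B + 1"
        using B1 by linarith
      then have "real_of_int (sum_list (map (\<lambda>T. vT T x) ts)) \<ge> real_of_int (int k * B + 1)"
        by (simp only: of_int_le_iff)
      moreover have "real_of_int (int k * B + 1) = \<theta>" unfolding \<theta>_def by simp
      ultimately show "real_of_int (sum_list (map (\<lambda>T. vT T x) ts)) \<ge> \<theta>" by simp
    next
      assume a: "real_of_int (sum_list (map (\<lambda>T. vT T x) ts)) \<ge> \<theta>"
      show "dnf_eval ts x"
      proof (rule ccontr)
        assume "\<not> dnf_eval ts x"
        then have "\<forall>T\<in>set ts. vT T x \<le> B" using small unfolding dnf_eval_def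
          by (meson abs_le_D1)
        then have "sum_list (map (\<lambda>T. vT T x) ts) \<le> int (length ts) * B" by (rule sum_list_upper)
        then have "real_of_int (sum_list (map (\<lambda>T. vT T x) ts)) \<le> real k * real_of_int B"
          using len by (metis of_int_le_iff of_int_mult of_int_of_nat_eq)
        with a show False unfolding \<theta>_def by simp
      qed
    qed
    have deg: "real d \<le> 64 * sqrt (real k) * log 2 (real k + 1)"
    proof -
      have "real d = real r * real s" by (simp add: d_def)
      also have "\<dots> \<le> (3 * sqrt (real k)) * (3 * log 2 (real k + 1))"
        using num_r[OF k1] num_s[OF k1] unfolding r_def s_def by (intro mult_mono) auto
      also have "\<dots> \<le> 64 * sqrt (real k) * log 2 (real k + 1)"
        using L_ge1[OF k1] by (simp add: algebra_simps)
      finally show ?thesis .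
    qed
    have deg9: "real d \<le> 9 * sqrt (real k) * log 2 (real k + 1)"
    proof -
      have "real d = real r * real s" by (simp add: d_def)
      also have "\<dots> \<le> (3 * sqrt (real k)) * (3 * log 2 (real k + 1))"
        using num_r[OF k1] num_s[OF k1] unfolding r_def s_def by (intro mult_mono) auto
      finally show ?thesis by simp
    qed
    have "aug_PTF F d W (dnf_eval ts)"
      unfolding aug_PTF_def
    proof (intro exI conjI)
      show "finite M" by (rule finM)
      show "\<forall>(T',R,S)\<in>M. (T',R)\<in>F \<and> S \<subseteq> R \<and> card S \<le> d" by (rule Mprop)
      show "real_of_int (\<Sum>m\<in>M. \<bar>cf L m\<bar>) \<le> W" using wtsum Wr by (metis of_int_le_iff)
      show "\<forall>x. dnf_eval ts x \<longleftrightarrow> real_of_int (\<Sum>(T',R,S)\<in>M. cf L (T',R,S) * aug_mono_val T' S x) \<ge> \<theta>"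
        using PTF val by simp
    qed
    moreover have "W \<le> 2 powr (64 * sqrt (real k) * (log 2 (real k + 1))^2)"
      unfolding W_def using num_W[OF k1 deg9] .
    ultimately show ?thesis using deg by blast
  qed
qed

end
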